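(* For two finite subsets $E,F\subseteq\mathbb{N}$ with $\min\{|E|,|F|\}\ge2$, we have $\mathcal{F}_E\subseteq\mathcal{F}_F$ if and only if $A_F\subseteq A_E$, $\Pi_F\setminus\{2\}\subseteq\Pi_E$, and $\alpha_E(p)=\alpha_F(p)$ for all $p\in A_F\setminus\Pi_E$.
   Context: $\mathbb{N}=\{1,2,\dots\}$, $\mathbb{N}_0=\{0\}\cup\mathbb{N}$, $\Pi$ the set of primes, $\Pi_z$ the set of prime divisors of $z$; $\{0,k\}+p\mathbb{Z}=p\mathbb{Z}\cup(k+p\mathbb{Z})$. The Kirch topology $\tau_K$ on $\mathbb{N}$ is generated by the base of all $a+b\mathbb{N}_0=\{a+bn:n\in\mathbb{N}_0\}$ with $a,b\in\mathbb{N}$ coprime and $b$ square-free. Closures $\overline{U}$ are in $\tau_K$; $\tau_x=\{U\in\tau_K:x\in U\}$. For finite $E\subseteq\mathbb{N}$, $\mathcal{F}_E=\{B\subseteq\mathbb{N}:\exists (U_x)_{x\in E}\in\prod_{x\in E}\tau_x\ (\bigcap_{x\in E}\overline{U_x}\subseteq B)\}$. For nonempty finite $E$: $\Pi_E=\bigcap_{z\in E}\Pi_z$; $A_E=\{p\in\Pi:\exists k\in\mathbb{N}\ (E\subseteq\{0,k\}+p\mathbb{Z})\}$; $\alpha_E:A_E\to\mathbb{N}_0$ is the unique function with $0\le\alpha_E(p)<p$ and $E\subseteq\{0,\alpha_E(p)\}+p\mathbb{Z}$ for all $p\in A_E$, $\alpha_E(2)=1$, and $\alpha_E(p)=0$ for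 $p\in\Pi_E\setminus\{2\}$. *)

theory Defs
  imports "HOL-Analysis.Analysis" "HOL-Computational_Algebra.Squarefree"
begin

text \<open>Positive naturals N = {1,2,...} are represented as the subset {1..} of nat.\<close>

definition arith_prog :: "nat \<Rightarrow> nat \<Rightarrow> nat set" where
  "arith_prog a b = {a + b * n | n. True}"

definition kirch_base :: "nat set set" where
  "kirch_base = {arith_prog a b | a b. a \<ge> 1 \<and> b \<ge> 1 \<and> coprime a b \<and> squarefree b}"

definition kirch_topology :: "nat topology" where
  "kirch_topology = topology_generated_by kirch_base"

definition tau_at :: "nat \<Rightarrow> nat set set" where
  "tau_at x = {U. openin kirch_topology U \<and> x \<in> U}"

definition filterF :: "nat set \<Rightarrow> nat set set" where
  "filterF E = {B. B \<subseteq> {1..} \<and>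
     (\<exists>U. (\<forall>x\<in>E. U x \<in> tau_at x) \<and> (\<Inter>x\<in>E. kirch_topology closure_of (U x)) \<subseteq> B)}"

definition PiE_set :: "nat set \<Rightarrow> nat set" where
  "PiE_set E = (\<Inter>z\<in>E. {p. prime p \<and> p dvd z})"

definition A_set :: "nat set \<Rightarrow> nat set" where
  "A_set E = {p. prime p \<and> (\<exists>k\<ge>1. \<forall>z\<in>E. z mod p = 0 \<or> z mod p = k mod p)}"

definition alpha :: "nat set \<Rightarrow> nat \<Rightarrow> nat" where
  "alpha E p = (THE a. a < p \<and> (\<forall>z\<in>E. z mod p = 0 \<or> z mod p = a)
        \<and> (p = 2 \<longrightarrow> a = 1) \<and> (p \<in> PiE_set E \<and> p \<noteq> 2 \<longrightarrow> a = 0))"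

end

theory Submission
  imports Defs "HOL-Number_Theory.Cong"
begin


lemma mem_ap: "m \<in> arith_prog a b \<longleftrightarrow> (\<exists>k. m = a + b*k)"
  unfolding arith_prog_def by auto

lemma topspace_K: "topspace kirch_topology = {1..}"
proof -
  have "\<Union>kirch_base = {1..}"
  proof
    show "\<Union>kirch_base \<subseteq> {1..}" unfolding kirch_base_def arith_prog_def by auto
    show "{1..} \<subseteq> \<Union>kirch_base"
    proof
      fix n :: nat assume "n \<in> {1..}"
      then have "n \<ge> 1 \<and> (1::nat) \<ge> 1 \<and> coprime n 1 \<and> squarefree (1::nat)" by simp
      then have "arith_prog n 1 \<in> kirch_base" unfolding kirch_base_def by blast
      moreover have "n \<in> arith_prog n 1" by (simp add: mem_ap)
      ultimately show "n \<in> \<Union>kirch_base" by blast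
    qed
  qed
  then show ?thesis unfolding kirch_topology_def by simp
qed

lemma ap_open: "a \<ge> 1 \<Longrightarrow> b \<ge> 1 \<Longrightarrow> coprime a b \<Longrightarrow> squarefree b \<Longrightarrow> openin kirch_topology (arith_prog a b)"
  unfolding kirch_topology_def by (rule topology_generated_by_Basis) (auto simp: kirch_base_def)

lemma ap_sub: "(b::nat) dvd c \<Longrightarrow> arith_prog x c \<subseteq> arith_prog x b"
  by (auto simp: mem_ap elim!: dvdE)

lemma sqf_lcm:
  fixes a b :: nat
  assumes "squarefree a" "squarefree b" shows "squarefree (lcm a b)"
proof -
  have a0: "a \<noteq> 0" and b0: "b \<noteq> 0" using assms by (metis not_squarefree_0)+
  then have l0: "lcm a b \<noteq> 0" by simp
  show ?thesis unfolding squarefree_factorial_semiring''[OF l0]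
  proof (intro allI impI)
    fix p :: nat assume p: "prime p"
    have "multiplicity p a \<le> 1" "multiplicity p b \<le> 1"
      using assms a0 b0 p squarefree_factorial_semiring'' by blast+
    then show "multiplicity p (lcm a b) \<le> 1" using multiplicity_lcm[OF a0 b0 p] by simp
  qed
qed

lemma open_nbhd:
  assumes "openin kirch_topology U" "x \<in> U"
  shows "\<exists>b\<ge>1. coprime x b \<and> squarefree b \<and> arith_prog x b \<subseteq> U"
proof -
  have "generate_topology_on kirch_base U"
    using assms(1) unfolding kirch_topology_def by (rule openin_topology_generated_by)
  then show ?thesis using assms(2)
  proof (induction arbitrary: x)
    case Empty then show ?case by simp
  next
    case (Int a b)
    then obtain b1 b2 where 1: "b1\<ge>1" "coprime x b1" "squarefree b1" "arith_prog x b1 \<subseteq> a"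
      and 2: "b2\<ge>1" "coprime x b2" "squarefree b2" "arith_prog x b2 \<subseteq> b" by blast
    have "lcm b1 b2 \<ge> 1" using 1 2 by (simp add: Suc_le_eq lcm_pos_nat)
    moreover have "coprime x (lcm b1 b2)" using 1 2
    proof -
      have "coprime x (b1 * b2)" using 1 2 by simp
      moreover have "lcm b1 b2 dvd b1 * b2" by (simp add: lcm_least)
      ultimately show ?thesis using coprime_divisors[of x x "lcm b1 b2" "b1*b2"] by simp
    qed
    moreover have "squarefree (lcm b1 b2)" using 1 2 sqf_lcm by blast
    moreover have "arith_prog x (lcm b1 b2) \<subseteq> a \<inter> b"
      using 1 2 ap_sub[of b1 "lcm b1 b2" x] ap_sub[of b2 "lcm b1 b2" x] by auto
    ultimately show ?case by blast
  next
    case (UN K)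
    then obtain k where "k \<in> K" "x \<in> k" by blast
    with UN.IH[OF this] show ?case by blast
  next
    case (Basis s)
    then obtain a b where s: "s = arith_prog a b" "a \<ge> 1" "b \<ge> 1" "coprime a b" "squarefree b"
      unfolding kirch_base_def by blast
    then obtain k where xk: "x = a + b*k" using Basis.prems by (auto simp: mem_ap)
    have "[a = a + b * k] (mod b)" by (simp add: cong_def)
    then have "coprime x b" using s(4) xk cong_imp_coprime by blast
    moreover have "arith_prog x b \<subseteq> s" using s xk
      by (auto simp: mem_ap) (metis add.assoc distrib_left)
    ultimately show ?case using s by blast
  qed
qed

lemma closure_upper:
  assumes "prime (q::nat)" "q dvd b" "m \<in> kirch_topology closure_of (arith_prog x b)"
  shows "m mod q = 0 \<or> m mod q = x mod q"
proof (rule ccontr)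
  assume c: "\<not> ?thesis"
  have m1: "m \<ge> 1" using assms(3) closure_of_subset_topspace topspace_K by fastforce
  have q1: "q \<ge> 1" using assms(1) prime_ge_1_nat by blast
  have "coprime m q" using c assms(1)
    by (metis coprime_commute dvd_eq_mod_eq_0 prime_imp_coprime)
  then have "openin kirch_topology (arith_prog m q)"
    using m1 q1 ap_open squarefree_prime assms(1) by blast
  moreover have "m \<in> arith_prog m q" by (simp add: mem_ap)
  ultimately obtain y where "y \<in> arith_prog x b" "y \<in> arith_prog m q"
    using assms(3) unfolding in_closure_of by blast
  then obtain i j where "y = x + b*i" "y = m + q*j" by (metis mem_ap)
  moreover obtain c where bc: "b = q * c" using assms(2) by blast
  ultimately have e1: "y = x + q * (c * i)" and e2: "y = m + q * j" by simp_all
  have "y mod q = x mod q" unfolding e1 by simp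
  moreover have "y mod q = m mod q" unfolding e2 by simp
  ultimately have "x mod q = m mod q" by simp
  then show False using c by simp
qed

lemma sqf_cong:
  fixes g n x :: nat
  assumes "squarefree g" "\<forall>q. prime q \<longrightarrow> q dvd g \<longrightarrow> [n = x] (mod q)"
  shows "[n = x] (mod g)"
  using assms
proof (induction g rule: less_induct)
  case (less g)
  show ?case
  proof (cases "g = 1")
    case True then show ?thesis by simp
  next
    case False
    have "g \<noteq> 0" using less.prems by (metis not_squarefree_0)
    then obtain q where q: "prime q" "q dvd g" using False prime_factor_nat by blast
    then obtain h where h: "g = q * h" by blast
    have "\<not> q dvd h"
    proof
      assume "q dvd h"
      then obtain r where r: "h = q * r" by blast
      then have "g = q^2 * r" using h by (simp add: power2_eq_square)
      then have "q^2 dvd g" by simp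
      then have "q dvd 1" using less.prems(1) squarefreeD by blast
      then show False using q(1) by simp
    qed
    then have cop: "coprime q h" using q(1) prime_imp_coprime by blast
    have "h \<noteq> 0" using h \<open>g \<noteq> 0\<close> by auto
    have "1 < q" using q(1) prime_gt_1_nat by blast
    then have "1 * h < q * h" using \<open>h \<noteq> 0\<close> by (intro mult_strict_right_mono) auto
    then have "h < g" using h by simp
    moreover have "squarefree h" using less.prems(1) h squarefree_mono by (metis dvd_triv_right)
    moreover have "\<forall>q. prime q \<longrightarrow> q dvd h \<longrightarrow> [n = x] (mod q)" using less.prems(2) h by auto
    ultimately have "[n = x] (mod h)" using less.IH by blast
    moreover have "[n = x] (mod q)" using less.prems(2) q by blast
    ultimately show ?thesis using h cop coprime_cong_mult_nat by blast
  qed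
qed

lemma ap_meet:
  fixes d b n x :: nat
  assumes "d \<ge> 1" "b \<ge> 1" "[n = x] (mod gcd d b)"
  shows "\<exists>i j. n + d*i = x + b*j"
proof (cases "n \<le> x")
  case True
  have "[x = n] (mod gcd d b)" using assms(3) by (rule cong_sym)
  then have "gcd d b dvd x - n" using True cong_altdef_nat by blast
  then obtain k where k: "x - n = gcd d b * k" by blast
  obtain u v where uv: "d * u = b * v + gcd d b" using bezout_nat[of d b] assms(1) by auto
  have "d * (u * k) = b * (v * k) + (gcd d b) * k"
    using arg_cong[OF uv, of "\<lambda>z. z * k"] by (simp add: algebra_simps)
  then have "n + d * (u * k) = x + b * (v * k)" using k True by simp
  then show ?thesis by blast
next
  case False
  then have "gcd d b dvd n - x" using assms(3) cong_altdef_nat by simp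
  then obtain k where k: "n - x = gcd d b * k" by blast
  obtain u v where uv: "b * u = d * v + gcd b d" using bezout_nat[of b d] assms(2) by auto
  have "b * (u * k) = d * (v * k) + (gcd d b) * k"
    using arg_cong[OF uv, of "\<lambda>z. z * k"] by (simp add: algebra_simps gcd.commute)
  then have "n + d * (v * k) = x + b * (u * k)" using k False by simp
  then show ?thesis by blast
qed

lemma closure_lower:
  fixes n x b :: nat
  assumes "n \<ge> 1" "b \<ge> 1" "squarefree b"
    "\<forall>q. prime q \<longrightarrow> q dvd b \<longrightarrow> \<not> q dvd n \<longrightarrow> [n = x] (mod q)"
  shows "n \<in> kirch_topology closure_of (arith_prog x b)"
  unfolding in_closure_of
proof (intro conjI allI impI)
  show "n \<in> topspace kirch_topology" using assms(1) topspace_K by simp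
  fix T assume T: "n \<in> T \<and> openin kirch_topology T"
  then obtain d where d: "d \<ge> 1" "coprime n d" "squarefree d" "arith_prog n d \<subseteq> T"
    using open_nbhd by blast
  have "squarefree (gcd d b)" using d(3) squarefree_mono by (metis gcd_dvd1)
  moreover have "\<forall>q. prime q \<longrightarrow> q dvd gcd d b \<longrightarrow> [n = x] (mod q)"
  proof (intro allI impI)
    fix q :: nat assume q: "prime q" "q dvd gcd d b"
    then have "\<not> q dvd n" using d(2)
      by (meson coprime_common_divisor dvd_trans gcd_dvd1 not_prime_unit)
    then show "[n = x] (mod q)" using assms(4) q by (meson dvd_trans gcd_dvd2)
  qed
  ultimately have "[n = x] (mod gcd d b)" by (rule sqf_cong)
  then obtain i j where "n + d*i = x + b*j" using ap_meet d(1) assms(2) by blast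
  then have "x + b*j \<in> arith_prog x b" "x + b*j \<in> arith_prog n d" by (auto simp: mem_ap, metis)
  then show "\<exists>y. y \<in> arith_prog x b \<and> y \<in> T" using d(4) by blast
qed



lemma alpha_two: "alpha E 2 = 1"
  unfolding alpha_def
proof (rule the_equality)
  have h: "\<forall>z\<in>E. z mod 2 = 0 \<or> z mod 2 = (1::nat)" by (intro ballI) presburger
  show "1 < (2::nat) \<and> (\<forall>z\<in>E. z mod 2 = 0 \<or> z mod 2 = 1) \<and> (2 = (2::nat) \<longrightarrow> 1 = (1::nat))
        \<and> (2 \<in> PiE_set E \<and> 2 \<noteq> (2::nat) \<longrightarrow> 1 = (0::nat))" using h by simp
next
  fix a :: nat assume "a < 2 \<and> (\<forall>z\<in>E. z mod 2 = 0 \<or> z mod 2 = a) \<and> (2 = (2::nat) \<longrightarrow> a = 1)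
        \<and> (2 \<in> PiE_set E \<and> 2 \<noteq> (2::nat) \<longrightarrow> a = 0)"
  then show "a = 1" by simp
qed

lemma alpha_char:
  assumes "prime p" "p \<noteq> 2" "z0 \<in> E" "\<not> p dvd z0" "\<forall>z\<in>E. p dvd z \<or> z mod p = z0 mod p"
  shows "alpha E p = z0 mod p"
  unfolding alpha_def
proof (rule the_equality)
  have pn: "p \<notin> PiE_set E" using assms(3,4) unfolding PiE_set_def by auto
  have lt: "z0 mod p < p" using assms(1) prime_gt_0_nat by simp
  show "z0 mod p < p \<and> (\<forall>z\<in>E. z mod p = 0 \<or> z mod p = z0 mod p) \<and> (p = 2 \<longrightarrow> z0 mod p = 1)
        \<and> (p \<in> PiE_set E \<and> p \<noteq> 2 \<longrightarrow> z0 mod p = 0)"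
  proof (intro conjI impI)
    show "z0 mod p < p" by (rule lt)
    show "\<forall>z\<in>E. z mod p = 0 \<or> z mod p = z0 mod p" using assms(5) by (simp add: dvd_eq_mod_eq_0)
    show "p = 2 \<Longrightarrow> z0 mod p = 1" using assms(2) by blast
    show "p \<in> PiE_set E \<and> p \<noteq> 2 \<Longrightarrow> z0 mod p = 0" using pn by blast
  qed
next
  fix a assume "a < p \<and> (\<forall>z\<in>E. z mod p = 0 \<or> z mod p = a) \<and> (p = 2 \<longrightarrow> a = 1)
        \<and> (p \<in> PiE_set E \<and> p \<noteq> 2 \<longrightarrow> a = 0)"
  then have "\<forall>z\<in>E. z mod p = 0 \<or> z mod p = a" by simp
  then have "z0 mod p = 0 \<or> z0 mod p = a" using assms(3) by (rule bspec)
  moreover have "z0 mod p \<noteq> 0" using assms(4) by (simp add: dvd_eq_mod_eq_0)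
  ultimately show "a = z0 mod p" by simp
qed



lemma fwd_key:
  assumes E0: "0 \<notin> E" "E \<noteq> {}" and F0: "0 \<notin> F"
    and sub: "filterF E \<subseteq> filterF F"
    and p: "prime p" and t: "\<not> p dvd t" and tF: "\<forall>y\<in>F. \<not> p dvd y \<longrightarrow> [t = y] (mod p)"
    and finF: "finite F"
  shows "\<forall>x\<in>E. \<not> p dvd x \<longrightarrow> [t = x] (mod p)"
proof -
  define G where "G = {n::nat. n \<ge> 1 \<and> (\<forall>x\<in>E. \<not> p dvd x \<longrightarrow> n mod p = 0 \<or> n mod p = x mod p)}"
  define U where "U x = (if p dvd x then {1..} else arith_prog x p)" for x
  have p1: "p \<ge> 1" using p prime_ge_1_nat by blast
  have "G \<in> filterF E"
    unfolding filterF_def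
  proof (intro CollectI conjI exI[of _ U])
    show "G \<subseteq> {1..}" unfolding G_def by auto
    show "\<forall>x\<in>E. U x \<in> tau_at x"
    proof
      fix x assume x: "x \<in> E"
      then have x1: "x \<ge> 1" using E0 by (cases x) auto
      show "U x \<in> tau_at x"
      proof (cases "p dvd x")
        case True
        then show ?thesis unfolding tau_at_def U_def using x1
          by (metis (no_types, lifting) atLeast_iff mem_Collect_eq openin_topspace topspace_K)
      next
        case False
        then have "coprime x p" using p by (metis coprime_commute prime_imp_coprime)
        then have "openin kirch_topology (arith_prog x p)"
          using ap_open x1 p1 squarefree_prime p by blast
        moreover have "x \<in> arith_prog x p" by (simp add: mem_ap)
        ultimately show ?thesis unfolding tau_at_def U_def using False by simp
      qed
    qed
    show "(\<Inter>x\<in>E. kirch_topology closure_of U x) \<subseteq> G"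
    proof
      fix n assume n: "n \<in> (\<Inter>x\<in>E. kirch_topology closure_of U x)"
      obtain x0 where "x0 \<in> E" using E0 by blast
      then have "n \<in> kirch_topology closure_of U x0" using n by blast
      then have "n \<ge> 1" using closure_of_subset_topspace topspace_K by fastforce
      moreover have "\<forall>x\<in>E. \<not> p dvd x \<longrightarrow> n mod p = 0 \<or> n mod p = x mod p"
      proof (intro ballI impI)
        fix x assume "x \<in> E" "\<not> p dvd x"
        then have "n \<in> kirch_topology closure_of U x" using n by blast
        moreover have "U x = arith_prog x p" unfolding U_def using \<open>\<not> p dvd x\<close> by simp
        ultimately have "n \<in> kirch_topology closure_of arith_prog x p" by simp
        then show "n mod p = 0 \<or> n mod p = x mod p" by (rule closure_upper[OF p dvd_refl])
      qed
      ultimately show "n \<in> G" unfolding G_def mem_Collect_eq by (rule conjI)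
    qed
  qed
  with sub have "G \<in> filterF F" by blast
  then obtain V where V: "\<forall>y\<in>F. V y \<in> tau_at y" and VG: "(\<Inter>y\<in>F. kirch_topology closure_of V y) \<subseteq> G"
    unfolding filterF_def by blast
  have "\<forall>y\<in>F. \<exists>b\<ge>1. coprime y b \<and> squarefree b \<and> arith_prog y b \<subseteq> V y"
    using V open_nbhd unfolding tau_at_def by blast
  then have "\<exists>b. \<forall>y\<in>F. b y \<ge> 1 \<and> coprime y (b y) \<and> squarefree (b y) \<and> arith_prog y (b y) \<subseteq> V y"
    by (rule bchoice)
  then obtain b where b: "\<forall>y\<in>F. b y \<ge> 1 \<and> coprime y (b y) \<and> squarefree (b y) \<and> arith_prog y (b y) \<subseteq> V y"
    by blast
  define M where "M = (\<Prod>y\<in>F. b y)"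
  define P where "P = prime_factors M - {p}"
  define M' where "M' = \<Prod>P"
  have "coprime M' p" unfolding M'_def
  proof (rule prod_coprime_left)
    fix q assume "q \<in> P"
    then have "prime q" "q \<noteq> p" unfolding P_def by (auto simp: in_prime_factors_iff)
    then show "coprime q p" using p primes_coprime by blast
  qed
  then obtain s where s: "[M' * s = 1] (mod p)" by (auto dest: cong_solve_coprime_nat)
  define n where "n = M' * (s * t)"
  have nt: "[n = t] (mod p)" unfolding n_def
    using cong_mult[OF s cong_refl[of t]] by (simp add: mult.assoc)
  have np: "\<not> p dvd n"
    using cong_dvd_iff[OF nt] t by simp
  then have n1: "n \<ge> 1" by (cases n) auto
  have "n \<in> (\<Inter>y\<in>F. kirch_topology closure_of V y)"
  proof
    fix y assume y: "y \<in> F"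
    have "n \<in> kirch_topology closure_of arith_prog y (b y)"
    proof (rule closure_lower)
      show "n \<ge> 1" by (rule n1)
      show "b y \<ge> 1" "squarefree (b y)" using b y by auto
      show "\<forall>q. prime q \<longrightarrow> q dvd b y \<longrightarrow> \<not> q dvd n \<longrightarrow> [n = y] (mod q)"
      proof (intro allI impI)
        fix q assume q: "prime q" "q dvd b y" "\<not> q dvd n"
        show "[n = y] (mod q)"
        proof (cases "q = p")
          case True
          have "\<not> p dvd y"
          proof
            assume "p dvd y"
            moreover have "coprime y (b y)" using b y by blast
            ultimately have "is_unit p" using q True coprime_common_divisor by blast
            then show False using p by simp
          qed
          then have "[t = y] (mod p)" using tF y by blast
          then show ?thesis using nt True by (metis cong_sym cong_trans)
        next
          case False
          have "b y dvd M" unfolding M_def using y finF by (simp add: dvd_prodI)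
          moreover have "M \<noteq> 0" unfolding M_def using b finF by auto
          ultimately have "q \<in> P" unfolding P_def using q False
            by (auto simp: in_prime_factors_iff intro: dvd_trans)
          moreover have "finite P" unfolding P_def by simp
          ultimately have "\<Prod>P = q * \<Prod>(P - {q})" using prod.remove[of P q "\<lambda>x. x"] by simp
          then have "q dvd M'" unfolding M'_def by simp
          then have "q dvd n" unfolding n_def by simp
          then show ?thesis using q by blast
        qed
      qed
    qed
    moreover have "kirch_topology closure_of arith_prog y (b y) \<subseteq> kirch_topology closure_of V y"
      using b y by (intro closure_of_mono) blast
    ultimately show "n \<in> kirch_topology closure_of V y" by blast
  qed
  then have "n \<in> G" using VG by blast
  then have nG: "\<forall>x\<in>E. \<not> p dvd x \<longrightarrow> n mod p = 0 \<or> n mod p = x mod p" unfolding G_def by blast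
  show ?thesis
  proof (intro ballI impI)
    fix x assume "x \<in> E" "\<not> p dvd x"
    then have "n mod p = x mod p" using nG np by (auto simp: dvd_eq_mod_eq_0)
    then have "[n = x] (mod p)" by (simp add: cong_def)
    then show "[t = x] (mod p)" using nt by (metis cong_sym cong_trans)
  qed
qed



lemma bwd:
  assumes E0: "0 \<notin> E" and finE: "finite E" and F0: "0 \<notin> F" "F \<noteq> {}"
    and c1: "A_set F \<subseteq> A_set E" and c2: "PiE_set F - {2} \<subseteq> PiE_set E"
    and c3: "\<forall>p \<in> A_set F - PiE_set E. alpha E p = alpha F p"
  shows "filterF E \<subseteq> filterF F"
proof
  fix B assume "B \<in> filterF E"
  then obtain U where B1: "B \<subseteq> {1..}" and U: "\<forall>x\<in>E. U x \<in> tau_at x"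
    and UB: "(\<Inter>x\<in>E. kirch_topology closure_of U x) \<subseteq> B"
    unfolding filterF_def by blast
  have "\<forall>x\<in>E. \<exists>b\<ge>1. coprime x b \<and> squarefree b \<and> arith_prog x b \<subseteq> U x"
    using U open_nbhd unfolding tau_at_def by blast
  then have "\<exists>b. \<forall>x\<in>E. b x \<ge> 1 \<and> coprime x (b x) \<and> squarefree (b x) \<and> arith_prog x (b x) \<subseteq> U x"
    by (rule bchoice)
  then obtain b where b: "\<forall>x\<in>E. b x \<ge> 1 \<and> coprime x (b x) \<and> squarefree (b x) \<and> arith_prog x (b x) \<subseteq> U x"
    by blast
  define Q where "Q = (\<Union>x\<in>E. prime_factors (b x))"
  have finQ: "finite Q" unfolding Q_def using finE by simp
  define Qy where "Qy y = {q\<in>Q. \<not> q dvd y}" for y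
  define V where "V y = \<Inter>(insert {1..} ((\<lambda>q. arith_prog y q) ` Qy y))" for y
  have V: "\<forall>y\<in>F. V y \<in> tau_at y"
  proof
    fix y assume y: "y \<in> F"
    then have y1: "y \<ge> 1" using F0 by (cases y) auto
    have "openin kirch_topology (V y)" unfolding V_def
    proof (rule openin_Inter)
      show "finite (insert {1..} ((\<lambda>q. arith_prog y q) ` Qy y))" unfolding Qy_def using finQ by simp
      show "insert {1..} ((\<lambda>q. arith_prog y q) ` Qy y) \<noteq> {}" by simp
      fix X assume "X \<in> insert {1..} ((\<lambda>q. arith_prog y q) ` Qy y)"
      then consider "X = {1..}" | q where "q \<in> Qy y" "X = arith_prog y q" by blast
      then show "openin kirch_topology X"
      proof cases
        case 1 then show ?thesis using openin_topspace[of kirch_topology] topspace_K by simp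
      next
        case 2
        then have q: "prime q" "\<not> q dvd y" unfolding Qy_def Q_def by (auto simp: in_prime_factors_iff)
        then have "coprime y q" by (metis coprime_commute prime_imp_coprime)
        moreover have "q \<ge> 1" using q(1) prime_ge_1_nat by blast
        ultimately show ?thesis using 2 ap_open y1 squarefree_prime q(1) by blast
      qed
    qed
    moreover have "y \<in> V y" unfolding V_def using y1 by (auto simp: mem_ap)
    ultimately show "V y \<in> tau_at y" unfolding tau_at_def by blast
  qed
  have VB: "(\<Inter>y\<in>F. kirch_topology closure_of V y) \<subseteq> B"
  proof
    fix n assume n: "n \<in> (\<Inter>y\<in>F. kirch_topology closure_of V y)"
    obtain y0 where "y0 \<in> F" using F0 by blast
    then have "n \<in> kirch_topology closure_of V y0" using n by blast
    then have n1: "n \<ge> 1" using closure_of_subset_topspace topspace_K by fastforce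
    have H: "n mod q = y mod q" if q: "q \<in> Q" "\<not> q dvd n" "y \<in> F" "\<not> q dvd y" for q y
    proof -
      have "q \<in> Qy y" unfolding Qy_def using q by blast
      then have "V y \<subseteq> arith_prog y q" unfolding V_def by blast
      then have "kirch_topology closure_of V y \<subseteq> kirch_topology closure_of arith_prog y q"
        by (rule closure_of_mono)
      moreover have "n \<in> kirch_topology closure_of V y" using n q(3) by blast
      ultimately have "n \<in> kirch_topology closure_of arith_prog y q" by blast
      moreover have "prime q" using q(1) unfolding Q_def by (auto simp: in_prime_factors_iff)
      ultimately have "n mod q = 0 \<or> n mod q = y mod q" using closure_upper[OF _ dvd_refl] by blast
      then show ?thesis using q(2) by (auto simp: dvd_eq_mod_eq_0)
    qed
    have "n \<in> (\<Inter>x\<in>E. kirch_topology closure_of U x)"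
    proof
      fix x assume x: "x \<in> E"
      have "n \<in> kirch_topology closure_of arith_prog x (b x)"
      proof (rule closure_lower)
        show "n \<ge> 1" by (rule n1)
        show "b x \<ge> 1" "squarefree (b x)" using b x by auto
        show "\<forall>q. prime q \<longrightarrow> q dvd b x \<longrightarrow> \<not> q dvd n \<longrightarrow> [n = x] (mod q)"
        proof (intro allI impI)
          fix q assume q: "prime q" "q dvd b x" "\<not> q dvd n"
          have "b x \<noteq> 0" using b x by auto
          then have qQ: "q \<in> Q" unfolding Q_def using q x by (auto simp: in_prime_factors_iff)
          have qx: "\<not> q dvd x"
          proof
            assume "q dvd x"
            moreover have "coprime x (b x)" using b x by blast
            ultimately have "is_unit q" using q coprime_common_divisor by blast
            then show False using q by simp
          qed
          show "[n = x] (mod q)"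
          proof (cases "q = 2")
            case True
            then show ?thesis using q(3) qx unfolding cong_def by presburger
          next
            case False
            show ?thesis
            proof (cases "\<forall>y\<in>F. q dvd y")
              case True
              then have "q \<in> PiE_set F" unfolding PiE_set_def using q(1) by blast
              then have "q \<in> PiE_set E" using c2 False by blast
              then have "q dvd x" using x unfolding PiE_set_def by blast
              then show ?thesis using qx by blast
            next
              case nd: False
              then obtain y0 where y0: "y0 \<in> F" "\<not> q dvd y0" by blast
              have y01: "y0 \<ge> 1" using y0 F0 by (cases y0) auto
              have Fy: "\<forall>z\<in>F. q dvd z \<or> z mod q = y0 mod q"
              proof
                fix z assume z: "z \<in> F"
                show "q dvd z \<or> z mod q = y0 mod q"
                proof (cases "q dvd z")
                  case False
                  then show ?thesis using H[OF qQ q(3) y0] H[OF qQ q(3) z False] by simp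
                qed simp
              qed
              have "q \<in> A_set F" unfolding A_set_def
              proof (intro CollectI conjI exI[of _ y0])
                show "prime q" by (rule q(1))
                show "y0 \<ge> 1" by (rule y01)
                show "\<forall>z\<in>F. z mod q = 0 \<or> z mod q = y0 mod q" using Fy by (auto simp: dvd_eq_mod_eq_0)
              qed
              moreover have "q \<notin> PiE_set E" using x qx unfolding PiE_set_def by blast
              ultimately have aeq: "alpha E q = alpha F q" using c3 by blast
              have aF: "alpha F q = y0 mod q" using alpha_char[OF q(1) False y0 Fy] .
              have "q \<in> A_set E" using c1 \<open>q \<in> A_set F\<close> by blast
              then obtain k where k: "\<forall>z\<in>E. z mod q = 0 \<or> z mod q = k mod q"
                unfolding A_set_def by blast
              have "x mod q \<noteq> 0" using qx by (simp add: dvd_eq_mod_eq_0)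
              moreover have "x mod q = 0 \<or> x mod q = k mod q" using k x by (rule bspec)
              ultimately have xk: "x mod q = k mod q" by simp
              have Ex: "\<forall>z\<in>E. q dvd z \<or> z mod q = x mod q"
              proof
                fix z assume "z \<in> E"
                then have "z mod q = 0 \<or> z mod q = k mod q" using k by (rule bspec[rotated])
                then show "q dvd z \<or> z mod q = x mod q" unfolding xk dvd_eq_mod_eq_0 .
              qed
              have aE: "alpha E q = x mod q" using alpha_char[OF q(1) False x qx Ex] .
              have "n mod q = y0 mod q" using H[OF qQ q(3) y0] .
              then show ?thesis using aE aF aeq unfolding cong_def by simp
            qed
          qed
        qed
      qed
      moreover have "kirch_topology closure_of arith_prog x (b x) \<subseteq> kirch_topology closure_of U x"
        using b x by (intro closure_of_mono) blast
      ultimately show "n \<in> kirch_topology closure_of U x" by blast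
    qed
    then show "n \<in> B" using UB by blast
  qed
  show "B \<in> filterF F" unfolding filterF_def using B1 V VB by blast
qed



theorem lemma3p5:
  fixes E F :: "nat set"
  assumes "finite E" "finite F" "0 \<notin> E" "0 \<notin> F"
    and "card E \<ge> 2" "card F \<ge> 2"
  shows "filterF E \<subseteq> filterF F \<longleftrightarrow>
    (A_set F \<subseteq> A_set E \<and> PiE_set F - {2} \<subseteq> PiE_set E \<and>
     (\<forall>p \<in> A_set F - PiE_set E. alpha E p = alpha F p))"
proof
  have En: "E \<noteq> {}" using assms(5) by (metis card.empty not_numeral_le_zero)
  have Fn: "F \<noteq> {}" using assms(6) by (metis card.empty not_numeral_le_zero)
  {
    assume sub: "filterF E \<subseteq> filterF F"
    note K = fwd_key[OF assms(3) En assms(4) sub _ _ _ assms(2)]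
    have c2: "PiE_set F - {2} \<subseteq> PiE_set E"
    proof
      fix p assume p: "p \<in> PiE_set F - {2}"
      obtain y where "y \<in> F" using Fn by blast
      then have pp: "prime p" using p unfolding PiE_set_def by blast
      have p2: "p > 2" using p pp prime_ge_2_nat[OF pp] by auto
      have allF: "\<forall>y\<in>F. p dvd y" using p unfolding PiE_set_def by blast
      have n1: "\<not> p dvd 1" using pp not_prime_unit by blast
      have n2: "\<not> p dvd 2" using p2 by (auto dest: dvd_imp_le)
      have t1: "\<forall>y\<in>F. \<not> p dvd y \<longrightarrow> [1 = y] (mod p)" using allF by blast
      have t2: "\<forall>y\<in>F. \<not> p dvd y \<longrightarrow> [2 = y] (mod p)" using allF by blast
      have K1: "\<forall>x\<in>E. \<not> p dvd x \<longrightarrow> [1 = x] (mod p)" by (rule K[OF pp n1 t1])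
      have K2: "\<forall>x\<in>E. \<not> p dvd x \<longrightarrow> [2 = x] (mod p)" by (rule K[OF pp n2 t2])
      have "\<forall>x\<in>E. p dvd x"
      proof (rule ballI, rule ccontr)
        fix x assume "x \<in> E" "\<not> p dvd x"
        then have "[1 = x] (mod p)" "[2 = x] (mod p)" using K1 K2 by blast+
        then have "[1 = 2] (mod p)" by (metis cong_sym cong_trans)
        then have "1 mod p = 2 mod p" unfolding cong_def .
        then show False using p2 by simp
      qed
      then show "p \<in> PiE_set E" unfolding PiE_set_def using pp by blast
    qed
    have c1: "A_set F \<subseteq> A_set E"
    proof
      fix p assume "p \<in> A_set F"
      then obtain k where pp: "prime p" and k: "\<forall>z\<in>F. z mod p = 0 \<or> z mod p = k mod p"
        unfolding A_set_def by blast
      show "p \<in> A_set E"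
      proof (cases "p = 2")
        case True
        have "\<forall>z\<in>E. z mod p = 0 \<or> z mod p = 1 mod p" unfolding True by (intro ballI) presburger
        then show ?thesis unfolding A_set_def using pp by blast
      next
        case False
        show ?thesis
        proof (cases "\<forall>y\<in>F. p dvd y")
          case True
          then have "p \<in> PiE_set F" unfolding PiE_set_def using pp by blast
          then have "p \<in> PiE_set E" using c2 False by blast
          then have "\<forall>z\<in>E. z mod p = 0 \<or> z mod p = 1 mod p" unfolding PiE_set_def
            by (auto simp: dvd_eq_mod_eq_0)
          then show ?thesis unfolding A_set_def using pp by blast
        next
          case nd: False
          then obtain y0 where y0: "y0 \<in> F" "\<not> p dvd y0" by blast
          have y01: "y0 \<ge> 1" using y0 assms(4) by (cases y0) auto
          have y0k: "y0 mod p = k mod p" using k y0 by (auto simp: dvd_eq_mod_eq_0)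
          have tF: "\<forall>y\<in>F. \<not> p dvd y \<longrightarrow> [y0 = y] (mod p)"
          proof (intro ballI impI)
            fix y assume "y \<in> F" "\<not> p dvd y"
            then have "y mod p = k mod p" using k by (auto simp: dvd_eq_mod_eq_0)
            then show "[y0 = y] (mod p)" unfolding cong_def using y0k by simp
          qed
          have KE: "\<forall>x\<in>E. \<not> p dvd x \<longrightarrow> [y0 = x] (mod p)" using K[OF pp y0(2) tF] .
          have "\<forall>z\<in>E. z mod p = 0 \<or> z mod p = y0 mod p"
          proof
            fix z assume "z \<in> E"
            show "z mod p = 0 \<or> z mod p = y0 mod p"
            proof (cases "p dvd z")
              case False
              then have "[y0 = z] (mod p)" using KE \<open>z \<in> E\<close> by blast
              then show ?thesis unfolding cong_def by simp
            qed (simp add: dvd_eq_mod_eq_0)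
          qed
          then show ?thesis unfolding A_set_def using pp y01 by blast
        qed
      qed
    qed
    have c3: "\<forall>p \<in> A_set F - PiE_set E. alpha E p = alpha F p"
    proof
      fix p assume p: "p \<in> A_set F - PiE_set E"
      show "alpha E p = alpha F p"
      proof (cases "p = 2")
        case True
        then show ?thesis using alpha_two by simp
      next
        case False
        from p obtain k where pp: "prime p" and k: "\<forall>z\<in>F. z mod p = 0 \<or> z mod p = k mod p"
          unfolding A_set_def by blast
        have "p \<notin> PiE_set F" using p c2 False by blast
        then obtain y0 where y0: "y0 \<in> F" "\<not> p dvd y0" unfolding PiE_set_def using pp by blast
        have "p \<notin> PiE_set E" using p by blast
        then obtain x0 where x0: "x0 \<in> E" "\<not> p dvd x0" unfolding PiE_set_def using pp by blast
        have y0k: "y0 mod p = k mod p" using k y0 by (auto simp: dvd_eq_mod_eq_0)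
        have Fy: "\<forall>z\<in>F. p dvd z \<or> z mod p = y0 mod p"
        proof
          fix z assume "z \<in> F"
          then have "z mod p = 0 \<or> z mod p = k mod p" using k by blast
          then show "p dvd z \<or> z mod p = y0 mod p" using y0k by (auto simp: dvd_eq_mod_eq_0)
        qed
        have tF: "\<forall>y\<in>F. \<not> p dvd y \<longrightarrow> [y0 = y] (mod p)"
          using Fy unfolding cong_def by auto
        have KE: "\<forall>x\<in>E. \<not> p dvd x \<longrightarrow> [y0 = x] (mod p)" using K[OF pp y0(2) tF] .
        have Ex: "\<forall>z\<in>E. p dvd z \<or> z mod p = x0 mod p"
        proof
          fix z assume z: "z \<in> E"
          show "p dvd z \<or> z mod p = x0 mod p"
          proof (cases "p dvd z")
            case False
            then have "[y0 = z] (mod p)" using KE z by blast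
            moreover have "[y0 = x0] (mod p)" using KE x0 by blast
            ultimately show ?thesis unfolding cong_def by simp
          qed simp
        qed
        have "alpha F p = y0 mod p" using alpha_char[OF pp False y0 Fy] .
        moreover have "alpha E p = x0 mod p" using alpha_char[OF pp False x0 Ex] .
        moreover have "[y0 = x0] (mod p)" using KE x0 by blast
        ultimately show ?thesis unfolding cong_def by simp
      qed
    qed
    show "A_set F \<subseteq> A_set E \<and> PiE_set F - {2} \<subseteq> PiE_set E \<and>
     (\<forall>p \<in> A_set F - PiE_set E. alpha E p = alpha F p)" using c1 c2 c3 by blast
  }
  {
    assume "A_set F \<subseteq> A_set E \<and> PiE_set F - {2} \<subseteq> PiE_set E \<and>
     (\<forall>p \<in> A_set F - PiE_set E. alpha E p = alpha F p)"
    then show "filterF E \<subseteq> filterF F"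
      using bwd[OF assms(3) assms(1) assms(4) Fn] by blast
  }
qed

end
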